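(* Let $\nu$ be a Borel probability measure on $\mathbb{R}^d$. Assume that $r>0$ and $\lambda_1,\dots,\lambda_d,M\ge1$. Then $$\nu\big(\{x:\ \nu(D(x,\lambda_1r,\dots,\lambda_dr))\ge M\,\nu(D(x,r))\}\big)\le 4^dM^{-1}\lambda_1\cdots\lambda_d.$$
   Context: For $x\in\mathbb{R}^d$ and $h_1,\dots,h_d\ge0$, $D(x,h_1,\dots,h_d)=\prod_{i=1}^d[x_i-h_i,x_i+h_i]$, and $D(x,r)=D(x,r,\dots,r)$. *)

theory Defs
  imports "HOL-Probability.Probability"
begin

definition Dbox :: "real^'n \<Rightarrow> ('n \<Rightarrow> real) \<Rightarrow> (real^'n) set" where
  "Dbox x h = {y. \<forall>i. x$i - h i \<le> y$i \<and> y$i \<le> x$i + h i}"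

end

theory Submission
  imports Defs "HOL-Library.Countable"
begin

lemma Dbox_closed: "closed (Dbox (x::real^'n) h)"
proof -
  have "Dbox x h = (\<Inter>i. {y. x$i - h i \<le> y$i} \<inter> {y. y$i \<le> x$i + h i})"
    unfolding Dbox_def by auto
  moreover have "closed {y::real^'n. x$i - h i \<le> y$i}" for i
    by (intro closed_Collect_le continuous_intros)
  moreover have "closed {y::real^'n. y$i \<le> x$i + h i}" for i
    by (intro closed_Collect_le continuous_intros)
  ultimately show ?thesis by (auto intro!: closed_INT)
qed

lemma card_T_bound:
  fixes u l :: real assumes "l \<ge> 1"
  shows "real (card {\<lfloor>u\<rfloor> .. \<lfloor>u + 2*l\<rfloor>}) \<le> 4 * l"
proof -
  have a: "real_of_int \<lfloor>u + 2*l\<rfloor> \<le> u + 2*l" by (rule of_int_floor_le)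
  have b: "u < real_of_int \<lfloor>u\<rfloor> + 1" by (rule real_of_int_floor_add_one_gt)
  have c: "\<lfloor>u\<rfloor> \<le> \<lfloor>u + 2*l\<rfloor>" using assms by (intro floor_mono) simp
  have "card {\<lfloor>u\<rfloor> .. \<lfloor>u + 2*l\<rfloor>} = nat (\<lfloor>u + 2*l\<rfloor> - \<lfloor>u\<rfloor> + 1)" by simp
  hence "real (card {\<lfloor>u\<rfloor> .. \<lfloor>u + 2*l\<rfloor>}) = real_of_int (\<lfloor>u + 2*l\<rfloor> - \<lfloor>u\<rfloor> + 1)"
    using c by simp
  also have "\<dots> \<le> 4 * l" using a b assms by linarith
  finally show ?thesis .
qed

theorem lemma4p2:
  fixes \<nu> :: "(real^'n) measure" and r M :: real and lam :: "'n \<Rightarrow> real"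
  assumes "prob_space \<nu>" and "sets \<nu> = sets borel"
    and "r > 0" and "\<And>i. lam i \<ge> 1" and "M \<ge> 1"
  shows "measure \<nu> {x. measure \<nu> (Dbox x (\<lambda>i. lam i * r)) \<ge> M * measure \<nu> (Dbox x (\<lambda>_. r))}
           \<le> 4 ^ CARD('n) / M * (\<Prod>i\<in>UNIV. lam i)"
proof -
  interpret prob_space \<nu> by fact
  define A where "A = {x. measure \<nu> (Dbox x (\<lambda>i. lam i * r)) \<ge> M * measure \<nu> (Dbox x (\<lambda>_. r))}"
  define C where "C = 4 ^ CARD('n) * (\<Prod>i\<in>UNIV. lam i)"
  have lampos: "lam i > 0" for i using assms(4)[of i] by simp
  have Cpos: "C \<ge> 0" unfolding C_def using lampos by (simp add: less_imp_le prod_nonneg)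
  have Dsets: "Dbox x h \<in> sets \<nu>" for x h
    using Dbox_closed[of x h] assms(2) by (simp add: borel_closed)
  show ?thesis
  proof (cases "A \<in> sets \<nu>")
    case False
    then show ?thesis using Cpos assms(5) unfolding A_def[symmetric] C_def[symmetric]
      by (simp add: measure_notin_sets C_def)
  next
    case Asets: True
    define Q :: "('n \<Rightarrow> int) \<Rightarrow> (real^'n) set" where
      "Q k = {y. \<forall>i. real_of_int (k i) * r \<le> y$i \<and> y$i < (real_of_int (k i) + 1) * r}" for k
    define a where "a k = (SOME x. x \<in> A \<inter> Q k)" for k
    define B where "B k = (if A \<inter> Q k = {} then {} else Dbox (a k) (\<lambda>i. lam i * r))" for k
    have Qsets: "Q k \<in> sets \<nu>" for k
    proof -
      have "Q k = (\<Inter>i. {y. real_of_int (k i) * r \<le> y$i} \<inter> {y. y$i < (real_of_int (k i) + 1) * r})"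
        unfolding Q_def by auto
      moreover have "{y::real^'n. real_of_int (k i) * r \<le> y$i} \<in> sets borel" for i
        by (intro borel_closed closed_Collect_le continuous_intros)
      moreover have "{y::real^'n. y$i < (real_of_int (k i) + 1) * r} \<in> sets borel" for i
        by (intro borel_open open_Collect_less continuous_intros)
      ultimately show ?thesis using assms(2) by auto
    qed
    have Bsets: "B k \<in> sets \<nu>" for k unfolding B_def using Dsets by auto
    have cell: "\<exists>k. x \<in> Q k" for x
    proof
      show "x \<in> Q (\<lambda>i. \<lfloor>x$i / r\<rfloor>)"
        unfolding Q_def using assms(3)
        by (auto simp: floor_divide_lower floor_divide_upper)
    qed
    have Qdisj: "disjoint_family Q"
    unfolding disjoint_family_on_def proof (intro ballI impI)
      fix k l :: "'n \<Rightarrow> int" assume "k \<in> UNIV" "l \<in> UNIV" "k \<noteq> l"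
      then obtain i where i: "k i \<noteq> l i" by auto
      show "Q k \<inter> Q l = {}"
      proof (rule ccontr)
        assume "Q k \<inter> Q l \<noteq> {}"
        then obtain y where y: "y \<in> Q k" "y \<in> Q l" by auto
        have "real_of_int (k i) * r \<le> y$i" "y$i < (real_of_int (k i) + 1) * r"
             "real_of_int (l i) * r \<le> y$i" "y$i < (real_of_int (l i) + 1) * r"
          using y unfolding Q_def by auto
        hence "real_of_int (k i) < real_of_int (l i) + 1" "real_of_int (l i) < real_of_int (k i) + 1"
          using assms(3) by (smt (verit) mult_le_cancel_right)+
        hence "k i = l i" by linarith
        with i show False by simp
      qed
    qed
    have "A = (\<Union>k. A \<inter> Q k)" using cell by blast
    hence "emeasure \<nu> A = emeasure \<nu> (\<Union>k. A \<inter> Q k)" by simp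
    also have "\<dots> = (\<integral>\<^sup>+k. emeasure \<nu> (A \<inter> Q k) \<partial>count_space UNIV)"
      using Qdisj Asets Qsets
      by (intro emeasure_UN_countable) (auto simp: disjoint_family_on_def)
    also have "\<dots> \<le> (\<integral>\<^sup>+k. ennreal (1/M) * emeasure \<nu> (B k) \<partial>count_space UNIV)"
    proof (intro nn_integral_mono)
      fix k
      show "emeasure \<nu> (A \<inter> Q k) \<le> ennreal (1/M) * emeasure \<nu> (B k)"
      proof (cases "A \<inter> Q k = {}")
        case True then show ?thesis by simp
      next
        case False
        hence ak: "a k \<in> A \<inter> Q k" unfolding a_def by (metis ex_in_conv someI)
        have sub: "Q k \<subseteq> Dbox (a k) (\<lambda>_. r)"
        proof
          fix y assume y: "y \<in> Q k"
          show "y \<in> Dbox (a k) (\<lambda>_. r)" unfolding Dbox_def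
          proof (intro CollectI allI)
            fix i
            have "real_of_int (k i) * r \<le> y$i" "y$i < (real_of_int (k i) + 1) * r"
                 "real_of_int (k i) * r \<le> a k$i" "a k$i < (real_of_int (k i) + 1) * r"
              using y ak unfolding Q_def by auto
            then show "a k $ i - r \<le> y $ i \<and> y $ i \<le> a k $ i + r" by (auto simp: algebra_simps)
          qed
        qed
        have "measure \<nu> (A \<inter> Q k) \<le> measure \<nu> (Dbox (a k) (\<lambda>_. r))"
          using sub Dsets by (intro finite_measure_mono) auto
        also have "\<dots> \<le> measure \<nu> (B k) / M"
          using ak False assms(5) unfolding A_def B_def by (simp add: field_simps)
        finally have "measure \<nu> (A \<inter> Q k) \<le> 1/M * measure \<nu> (B k)" by simp
        hence "ennreal (measure \<nu> (A \<inter> Q k)) \<le> ennreal (1/M * measure \<nu> (B k))"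
          by (rule ennreal_leI)
        also have "\<dots> = ennreal (1/M) * ennreal (measure \<nu> (B k))"
          using assms(5) by (simp add: ennreal_mult[symmetric])
        finally show ?thesis by (simp add: emeasure_eq_measure)
      qed
    qed
    also have "\<dots> = ennreal (1/M) * (\<integral>\<^sup>+k. emeasure \<nu> (B k) \<partial>count_space UNIV)"
      by (rule nn_integral_cmult) auto
    also have "(\<integral>\<^sup>+k. emeasure \<nu> (B k) \<partial>count_space UNIV)
        = (\<integral>\<^sup>+k. \<integral>\<^sup>+z. indicator (B k) z \<partial>\<nu> \<partial>count_space UNIV)"
      using Bsets by (simp add: nn_integral_indicator)
    also have "\<dots> = (\<integral>\<^sup>+z. \<integral>\<^sup>+k. indicator (B k) z \<partial>count_space UNIV \<partial>\<nu>)"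
      using Bsets by (intro nn_integral_count_space_nn_integral[symmetric]) auto
    also have "\<dots> \<le> (\<integral>\<^sup>+z. ennreal C \<partial>\<nu>)"
    proof (intro nn_integral_mono)
      fix z
      define T where "T i = {\<lfloor>z$i/r - lam i\<rfloor> .. \<lfloor>(z$i/r - lam i) + 2 * lam i\<rfloor>}" for i
      define S where "S = PiE UNIV T"
      have finS: "finite S" unfolding S_def T_def by (intro finite_PiE) auto
      have "(\<integral>\<^sup>+k. indicator (B k) z \<partial>count_space UNIV) \<le> (\<integral>\<^sup>+k. indicator S k \<partial>count_space UNIV)"
      proof (intro nn_integral_mono)
        fix k
        show "(indicator (B k) z :: ennreal) \<le> indicator S k"
        proof (cases "z \<in> B k")
          case False then show ?thesis by simp
        next
          case True
          hence ne: "A \<inter> Q k \<noteq> {}" and zD: "z \<in> Dbox (a k) (\<lambda>i. lam i * r)"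
            unfolding B_def by (auto split: if_splits)
          hence ak: "a k \<in> Q k" unfolding a_def by (metis IntE ex_in_conv someI)
          have "k i \<in> T i" for i
          proof -
            have 1: "real_of_int (k i) * r \<le> a k$i" "a k$i < (real_of_int (k i) + 1) * r"
              using ak unfolding Q_def by auto
            have 2: "a k$i - lam i * r \<le> z$i" "z$i \<le> a k$i + lam i * r"
              using zD unfolding Dbox_def by auto
            have "real_of_int (k i) * r \<le> (z$i/r + lam i) * r"
              using 1 2 assms(3) by (simp add: algebra_simps)
            hence "real_of_int (k i) \<le> z$i/r + lam i" using assms(3) by simp
            hence u: "k i \<le> \<lfloor>(z$i/r - lam i) + 2 * lam i\<rfloor>" by (simp add: le_floor_iff)
            have "(z$i/r - lam i) * r < (real_of_int (k i) + 1) * r"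
              using 1 2 assms(3) by (simp add: algebra_simps)
            hence "z$i/r - lam i < real_of_int (k i) + 1" using assms(3) by simp
            hence "\<lfloor>z$i/r - lam i\<rfloor> \<le> k i" by linarith
            with u show ?thesis unfolding T_def by simp
          qed
          hence "k \<in> S" unfolding S_def by (auto simp: PiE_def extensional_def)
          then show ?thesis by (simp add: indicator_def)
        qed
      qed
      also have "\<dots> = emeasure (count_space UNIV) S" by simp
      also have "\<dots> = of_nat (card S)" using finS by (simp add: emeasure_count_space_finite)
      also have "\<dots> = ennreal (real (card S))" by (simp add: ennreal_of_nat_eq_real_of_nat)
      also have "real (card S) \<le> C"
      proof -
        have "real (card S) = (\<Prod>i\<in>UNIV. real (card (T i)))"
          unfolding S_def by (simp add: card_PiE)
        also have "\<dots> \<le> (\<Prod>i\<in>UNIV. 4 * lam i)"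
          unfolding T_def by (intro prod_mono conjI card_T_bound assms(4)) simp
        also have "\<dots> = C" unfolding C_def by (simp add: prod.distrib)
        finally show ?thesis .
      qed
      hence "ennreal (real (card S)) \<le> ennreal C" by (rule ennreal_leI)
      finally show "(\<integral>\<^sup>+k. indicator (B k) z \<partial>count_space UNIV) \<le> ennreal C" .
    qed
    also have "\<dots> = ennreal C" by (simp add: emeasure_space_1)
    finally have "emeasure \<nu> A \<le> ennreal (1/M) * ennreal C"
      using mult_left_mono by (metis zero_le)
    hence "ennreal (measure \<nu> A) \<le> ennreal (1/M * C)"
      using assms(5) Cpos by (simp add: emeasure_eq_measure ennreal_mult[symmetric])
    hence "measure \<nu> A \<le> 1/M * C" using assms(5) Cpos by (simp add: ennreal_le_iff)
    then show ?thesis unfolding A_def C_def by simp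
  qed
qed

end
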